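(* Let $T_1,T_2$ be tables joined on column $J$, with frequencies $a_v$ and $b_v$ for $v\in\mathcal U$. Let $0<p_1,q_1,p_2,q_2\le 1$, let $S_1=\mathrm{UBS}_{p_1,q_1}(T_1,J)$ and $S_2=\mathrm{UBS}_{p_2,q_2}(T_2,J)$ be produced with a common hash function $h$, let $p=\min\{p_1,p_2\}$, and let $\hat J_{\mathrm{count}} = \frac{1}{p\,q_1q_2}|S_1\bowtie_J S_2|$. Then $$\mathrm{Var}(\hat J_{\mathrm{count}}) = \frac{1-p}{p}\gamma_{2,2} + \frac{1-q_2}{p q_2}\gamma_{2,1} + \frac{1-q_1}{p q_1}\gamma_{1,2} + \frac{(1-q_1)(1-q_2)}{p q_1 q_2}\gamma_{1,1},$$ where $\gamma_{i,j}=\sum_{v\in\mathcal U} a_v^i b_v^j$.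
   Context: $T_1,T_2$ are finite multisets of tuples, each having a join attribute $J$ taking values in a finite set $\mathcal U$; $a_v$ (resp. $b_v$) is the number of tuples of $T_1$ (resp. $T_2$) whose $J$-value is $v$. $S_1\bowtie_J S_2$ is the set of pairs $(t_1,t_2)\in S_1\times S_2$ with $t_1.J=t_2.J$. Universe-Bernoulli sampling $\mathrm{UBS}_{p,q}(T,J)$: given a hash function $h:\mathcal U\to[0,1]$, each tuple $t\in T$ with $h(t.J)<p$ is included in the sample independently with probability $q$; all other tuples are excluded. The hash function is perfect: the values $h(v)$, $v\in\mathcal U$, are independent and uniform on $[0,1]$; the same $h$ is used for both tables; the Bernoulli inclusion coins are independent across all tuples of both tables and independent of $h$. *)

theory Defs
  imports "HOL-Probability.Probability"
begin

text \<open>A table is a finite set of row identifiers T together with the join-attribute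
  map J giving the J-value of each row (this represents a finite multiset of tuples).\<close>

definition freq :: "'r set \<Rightarrow> ('r \<Rightarrow> 'u) \<Rightarrow> 'u \<Rightarrow> nat" where
  "freq T J v = card {t \<in> T. J t = v}"

definition gamma :: "'u set \<Rightarrow> ('u \<Rightarrow> nat) \<Rightarrow> ('u \<Rightarrow> nat) \<Rightarrow> nat \<Rightarrow> nat \<Rightarrow> real" where
  "gamma U a b i j = (\<Sum>v\<in>U. real (a v) ^ i * real (b v) ^ j)"

text \<open>Probability space: a perfect hash h (independent uniform values on [0,1] for each
  v in U), and independent Bernoulli inclusion coins for every row of both tables.\<close>

definition ubs_space ::
  "'u set \<Rightarrow> 'r1 set \<Rightarrow> 'r2 set \<Rightarrow> real \<Rightarrow> real \<Rightarrow>
     (('u \<Rightarrow> real) \<times> ('r1 \<Rightarrow> bool) \<times> ('r2 \<Rightarrow> bool)) measure" where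
  "ubs_space U T1 T2 q1 q2 =
     (\<Pi>\<^sub>M v\<in>U. uniform_measure lborel {0..1::real}) \<Otimes>\<^sub>M
     ((\<Pi>\<^sub>M t\<in>T1. measure_pmf (bernoulli_pmf q1)) \<Otimes>\<^sub>M
      (\<Pi>\<^sub>M t\<in>T2. measure_pmf (bernoulli_pmf q2)))"

definition ubs :: "'r set \<Rightarrow> ('r \<Rightarrow> 'u) \<Rightarrow> real \<Rightarrow> ('u \<Rightarrow> real) \<Rightarrow> ('r \<Rightarrow> bool) \<Rightarrow> 'r set" where
  "ubs T J p h c = {t \<in> T. h (J t) < p \<and> c t}"

definition join_card :: "'r1 set \<Rightarrow> ('r1 \<Rightarrow> 'u) \<Rightarrow> 'r2 set \<Rightarrow> ('r2 \<Rightarrow> 'u) \<Rightarrow> nat" where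
  "join_card S1 J1 S2 J2 = card {(t1, t2) \<in> S1 \<times> S2. J1 t1 = J2 t2}"

end

theory Submission
  imports Defs
begin

lemma pair_int:
  fixes f :: "'a \<Rightarrow> real" and g :: "'b \<Rightarrow> real"
  assumes M: "prob_space M" and N: "prob_space N"
  and f: "f \<in> borel_measurable M" and g: "g \<in> borel_measurable N"
  and fb: "\<And>x. \<bar>f x\<bar> \<le> B1" and gb: "\<And>y. \<bar>g y\<bar> \<le> B2"
  shows "integrable (M \<Otimes>\<^sub>M N) (\<lambda>z. f (fst z) * g (snd z))"
    and "(\<integral>z. f (fst z) * g (snd z) \<partial>(M \<Otimes>\<^sub>M N)) = (\<integral>x. f x \<partial>M) * (\<integral>y. g y \<partial>N)"
proof -
  interpret P: pair_prob_space M N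
    using M N by (simp add: pair_prob_space_def pair_sigma_finite_def prob_space_imp_sigma_finite)
  show int: "integrable (M \<Otimes>\<^sub>M N) (\<lambda>z. f (fst z) * g (snd z))"
  proof (rule P.integrable_const_bound[where B="B1*B2"])
    show "AE x in M \<Otimes>\<^sub>M N. norm (f (fst x) * g (snd x)) \<le> B1 * B2"
      using fb gb by (auto simp: abs_mult intro!: mult_mono order_trans[OF abs_ge_zero fb])
    show "(\<lambda>z. f (fst z) * g (snd z)) \<in> borel_measurable (M \<Otimes>\<^sub>M N)"
      using f g by measurable
  qed
  have "(\<integral>z. f (fst z) * g (snd z) \<partial>(M \<Otimes>\<^sub>M N)) = (\<integral>x. (\<integral>y. f x * g y \<partial>N) \<partial>M)"
    using P.integral_fst'[OF int] by simp
  also have "\<dots> = (\<integral>x. f x * (\<integral>y. g y \<partial>N) \<partial>M)"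
    by simp
  also have "\<dots> = (\<integral>x. f x \<partial>M) * (\<integral>y. g y \<partial>N)"
    by simp
  finally show "(\<integral>z. f (fst z) * g (snd z) \<partial>(M \<Otimes>\<^sub>M N)) = (\<integral>x. f x \<partial>M) * (\<integral>y. g y \<partial>N)" .
qed

lemma pi_int2:
  fixes f g :: "'a \<Rightarrow> real"
  assumes M: "prob_space M" and I: "finite I" "i \<in> I" "j \<in> I"
  and f: "f \<in> borel_measurable M" and g: "g \<in> borel_measurable M"
  and fb: "\<And>x. \<bar>f x\<bar> \<le> B1" and gb: "\<And>y. \<bar>g y\<bar> \<le> B2"
  shows "(\<integral>x. f (x i) * g (x j) \<partial>(\<Pi>\<^sub>M k\<in>I. M)) =
     (if i = j then (\<integral>y. f y * g y \<partial>M) else (\<integral>y. f y \<partial>M) * (\<integral>y. g y \<partial>M))"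
proof -
  interpret prob_space M by (rule M)
  interpret P: product_prob_space "\<lambda>_. M" I
    by (simp add: product_prob_space_def product_prob_space_axioms_def product_sigma_finite_def M
       prob_space_imp_sigma_finite)
  have intf: "integrable M f" using fb f by (intro integrable_const_bound[where B=B1]) auto
  have intg: "integrable M g" using gb g by (intro integrable_const_bound[where B=B2]) auto
  have intfg: "integrable M (\<lambda>y. f y * g y)"
    using fb gb f g by (intro integrable_const_bound[where B="B1*B2"])
      (auto simp: abs_mult intro!: mult_mono order_trans[OF abs_ge_zero fb])
  show ?thesis
  proof (cases "i = j")
    case True
    define F where "F k y = (if k = i then f y * g y else (1::real))" for k y
    have "(\<integral>x. (\<Prod>k\<in>I. F k (x k)) \<partial>(\<Pi>\<^sub>M k\<in>I. M)) = (\<Prod>k\<in>I. integral\<^sup>L M (F k))"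
      apply (rule P.product_integral_prod[OF I(1)])
      subgoal for k by (cases "k = i") (simp_all add: F_def intfg)
      done
    moreover have "\<And>x. (\<Prod>k\<in>I. F k (x k)) = f (x i) * g (x i)"
      using I by (simp add: F_def prod.If_cases)
    moreover have "(\<Prod>k\<in>I. integral\<^sup>L M (F k)) = (\<integral>y. f y * g y \<partial>M)"
      proof -
      have "\<And>k. integral\<^sup>L M (F k) = (if k = i then (\<integral>y. f y * g y \<partial>M) else 1)"
        by (simp add: F_def[abs_def] prob_space)
      then show ?thesis using I by (simp add: prod.If_cases)
    qed
    ultimately show ?thesis using True by simp
  next
    case False
    define F where "F k y = (if k = i then f y else if k = j then g y else (1::real))" for k y
    have "(\<integral>x. (\<Prod>k\<in>I. F k (x k)) \<partial>(\<Pi>\<^sub>M k\<in>I. M)) = (\<Prod>k\<in>I. integral\<^sup>L M (F k))"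
      apply (rule P.product_integral_prod[OF I(1)])
      subgoal for k by (cases "k = i"; cases "k = j") (simp_all add: F_def intf intg)
      done
    moreover have "\<And>x. (\<Prod>k\<in>I. F k (x k)) = f (x i) * g (x j)"
      using I False by (simp add: F_def prod.If_cases Int_absorb1 Diff_eq[symmetric] insert_Diff_if)
    moreover have "(\<Prod>k\<in>I. integral\<^sup>L M (F k)) = (\<integral>y. f y \<partial>M) * (\<integral>y. g y \<partial>M)"
      proof -
      have "\<And>k. integral\<^sup>L M (F k) = (if k = i then (\<integral>y. f y \<partial>M) else if k = j then (\<integral>y. g y \<partial>M) else 1)"
        by (simp add: F_def[abs_def] prob_space)
      then show ?thesis using I False by (simp add: prod.If_cases Int_absorb1 Diff_eq[symmetric])
    qed
    ultimately show ?thesis using False by simp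
  qed
qed


lemma join_sum:
  fixes h :: "'u \<Rightarrow> real"
  assumes U: "finite U" and T: "finite T1" "finite T2"
    and J: "J1 ` T1 \<subseteq> U" "J2 ` T2 \<subseteq> U"
  shows "real (join_card (ubs T1 J1 p1 h c1) J1 (ubs T2 J2 p2 h c2) J2) =
    (\<Sum>v\<in>U. of_bool (h v < p1 \<and> h v < p2) * (\<Sum>t\<in>T1. of_bool (J1 t = v \<and> c1 t))
        * (\<Sum>t\<in>T2. of_bool (J2 t = v \<and> c2 t)))"
proof -
  define P where "P t1 t2 = (h (J1 t1) < p1 \<and> c1 t1 \<and> h (J2 t2) < p2 \<and> c2 t2 \<and> J1 t1 = J2 t2)" for t1 t2
  have "{(t1, t2) \<in> ubs T1 J1 p1 h c1 \<times> ubs T2 J2 p2 h c2. J1 t1 = J2 t2} =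
        (T1 \<times> T2) \<inter> {z. P (fst z) (snd z)}"
    by (auto simp: ubs_def P_def)
  then have "real (join_card (ubs T1 J1 p1 h c1) J1 (ubs T2 J2 p2 h c2) J2) =
       (\<Sum>z\<in>T1 \<times> T2. of_bool (P (fst z) (snd z)))"
    using T by (simp add: join_card_def)
  also have "\<dots> = (\<Sum>t1\<in>T1. \<Sum>t2\<in>T2. of_bool (P t1 t2))"
    by (simp add: sum.cartesian_product split_beta)
  also have "\<dots> = (\<Sum>t1\<in>T1. \<Sum>t2\<in>T2. \<Sum>v\<in>U. of_bool (h v < p1 \<and> h v < p2) *
        of_bool (J1 t1 = v \<and> c1 t1) * of_bool (J2 t2 = v \<and> c2 t2))"
  proof (intro sum.cong refl)
    fix t1 t2 assume t: "t1 \<in> T1" "t2 \<in> T2"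
    have "(\<Sum>v\<in>U. of_bool (h v < p1 \<and> h v < p2) *
        of_bool (J1 t1 = v \<and> c1 t1) * of_bool (J2 t2 = v \<and> c2 t2)) =
        (\<Sum>v\<in>U. if J1 t1 = v then of_bool (P t1 t2) else (0::real))"
      by (intro sum.cong refl) (auto simp: P_def)
    also have "\<dots> = of_bool (P t1 t2)" using U J t by (auto simp: sum.delta)
    finally show "(of_bool (P t1 t2)::real) = (\<Sum>v\<in>U. of_bool (h v < p1 \<and> h v < p2) *
        of_bool (J1 t1 = v \<and> c1 t1) * of_bool (J2 t2 = v \<and> c2 t2))" by (rule sym)
  qed
  also have "\<dots> = (\<Sum>t1\<in>T1. \<Sum>v\<in>U. \<Sum>t2\<in>T2. of_bool (h v < p1 \<and> h v < p2) *
        of_bool (J1 t1 = v \<and> c1 t1) * of_bool (J2 t2 = v \<and> c2 t2))"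
    by (intro sum.cong refl sum.swap)
  also have "\<dots> = (\<Sum>v\<in>U. \<Sum>t1\<in>T1. \<Sum>t2\<in>T2. of_bool (h v < p1 \<and> h v < p2) *
        of_bool (J1 t1 = v \<and> c1 t1) * of_bool (J2 t2 = v \<and> c2 t2))"
    by (rule sum.swap)
  also have "\<dots> = (\<Sum>v\<in>U. of_bool (h v < p1 \<and> h v < p2) * (\<Sum>t\<in>T1. of_bool (J1 t = v \<and> c1 t))
        * (\<Sum>t\<in>T2. of_bool (J2 t = v \<and> c2 t)))"
    by (intro sum.cong refl) (unfold mult.assoc sum_product, simp only: sum_distrib_left)
  finally show ?thesis .
qed


lemma triple_int:
  fixes f :: "'a \<Rightarrow> real" and g :: "'b \<Rightarrow> real" and k :: "'c \<Rightarrow> real"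
  assumes M: "prob_space M" and N: "prob_space N" and K: "prob_space K"
  and f: "f \<in> borel_measurable M" and g: "g \<in> borel_measurable N" and k: "k \<in> borel_measurable K"
  and fb: "\<And>x. \<bar>f x\<bar> \<le> B1" and gb: "\<And>y. \<bar>g y\<bar> \<le> B2" and kb: "\<And>y. \<bar>k y\<bar> \<le> B3"
  shows "integrable (M \<Otimes>\<^sub>M (N \<Otimes>\<^sub>M K)) (\<lambda>\<omega>. f (fst \<omega>) * g (fst (snd \<omega>)) * k (snd (snd \<omega>)))"
    and "(\<integral>\<omega>. f (fst \<omega>) * g (fst (snd \<omega>)) * k (snd (snd \<omega>)) \<partial>(M \<Otimes>\<^sub>M (N \<Otimes>\<^sub>M K))) =
         (\<integral>x. f x \<partial>M) * (\<integral>y. g y \<partial>N) * (\<integral>z. k z \<partial>K)"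
proof -
  define G where "G z = g (fst z) * k (snd z)" for z
  have Gm: "G \<in> borel_measurable (N \<Otimes>\<^sub>M K)" unfolding G_def using g k by measurable
  have Gb: "\<And>z. \<bar>G z\<bar> \<le> B2 * B3"
    using gb kb by (auto simp: G_def abs_mult intro!: mult_mono order_trans[OF abs_ge_zero gb])
  have NK: "prob_space (N \<Otimes>\<^sub>M K)" by (rule prob_space_pair[OF N K])
  have eq: "(\<lambda>\<omega>. f (fst \<omega>) * g (fst (snd \<omega>)) * k (snd (snd \<omega>))) = (\<lambda>\<omega>. f (fst \<omega>) * G (snd \<omega>))"
    by (auto simp: G_def mult.assoc)
  show "integrable (M \<Otimes>\<^sub>M (N \<Otimes>\<^sub>M K)) (\<lambda>\<omega>. f (fst \<omega>) * g (fst (snd \<omega>)) * k (snd (snd \<omega>)))"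
    unfolding eq by (rule pair_int(1)[OF M NK f Gm fb Gb])
  have "(\<integral>z. G z \<partial>(N \<Otimes>\<^sub>M K)) = (\<integral>y. g y \<partial>N) * (\<integral>z. k z \<partial>K)"
    unfolding G_def by (rule pair_int(2)[OF N K g k gb kb])
  then show "(\<integral>\<omega>. f (fst \<omega>) * g (fst (snd \<omega>)) * k (snd (snd \<omega>)) \<partial>(M \<Otimes>\<^sub>M (N \<Otimes>\<^sub>M K))) =
         (\<integral>x. f x \<partial>M) * (\<integral>y. g y \<partial>N) * (\<integral>z. k z \<partial>K)"
    unfolding eq by (simp add: pair_int(2)[OF M NK f Gm fb Gb] mult.assoc)
qed

lemma unif_prob: "prob_space (uniform_measure lborel {0..1::real})"
  by (rule prob_space_uniform_measure) auto

lemma unif_F: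
  assumes "0 \<le> p" "p \<le> 1"
  shows "(\<integral>y. indicator {..<p} y \<partial>(uniform_measure lborel {0..1::real})) = (p::real)"
proof -
  have "{0..1} \<inter> {..<p} = {0..<p}" using assms by auto
  then show ?thesis using assms by simp
qed

lemma coin_moments:
  fixes T :: "'r set" and J :: "'r \<Rightarrow> 'u"
  assumes T: "finite T" and q: "0 \<le> q" "q \<le> 1"
  defines "C \<equiv> (\<Pi>\<^sub>M t\<in>T. measure_pmf (bernoulli_pmf q))"
  shows "(\<lambda>c. \<Sum>t\<in>T. of_bool (J t = v \<and> c t) :: real) \<in> borel_measurable C"
    and "\<And>c. \<bar>\<Sum>t\<in>T. of_bool (J t = v \<and> c t) :: real\<bar> \<le> real (card T)"
    and "(\<integral>c. (\<Sum>t\<in>T. of_bool (J t = v \<and> c t) :: real) \<partial>C) = q * real (freq T J v)"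
    and "(\<integral>c. (\<Sum>t\<in>T. of_bool (J t = v \<and> c t) :: real) * (\<Sum>t\<in>T. of_bool (J t = w \<and> c t)) \<partial>C)
          = q^2 * real (freq T J v) * real (freq T J w) + (if v = w then (q - q^2) * real (freq T J v) else 0)"
proof -
  have Bp: "prob_space (measure_pmf (bernoulli_pmf q))" by (rule prob_space_measure_pmf)
  interpret P: prob_space C unfolding C_def by (rule prob_space_PiM) (rule Bp)
  have bm: "(\<lambda>b::bool. of_bool b :: real) \<in> borel_measurable (measure_pmf (bernoulli_pmf q))" by simp
  have one: "(\<lambda>b::bool. 1 :: real) \<in> borel_measurable (measure_pmf (bernoulli_pmf q))" by simp
  have ob: "\<And>b. \<bar>of_bool b :: real\<bar> \<le> 1" by simp
  have ob1: "\<And>b::bool. \<bar>1 :: real\<bar> \<le> 1" by simp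
  have pi2: "(\<integral>c. of_bool (c t) * of_bool (c s) \<partial>C) = (if t = s then q else q^2)"
    if "t \<in> T" "s \<in> T" for t s
    unfolding C_def using pi_int2[OF Bp T that bm bm ob ob] q by (simp add: power2_eq_square)
  have pi1: "(\<integral>c. of_bool (c t) \<partial>C) = q" if "t \<in> T" for t
    unfolding C_def using pi_int2[OF Bp T that that bm one ob ob1] q by simp
  have mt: "(\<lambda>c. of_bool (c t) :: real) \<in> borel_measurable C" if "t \<in> T" for t
    unfolding C_def using that by measurable
  have eqA: "\<And>c v. (\<Sum>t\<in>T. of_bool (J t = v \<and> c t) :: real) = (\<Sum>t\<in>T. of_bool (J t = v) * of_bool (c t))"
    by (intro sum.cong) auto
  have it: "integrable C (\<lambda>c. of_bool (c t) :: real)" if "t \<in> T" for t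
    by (rule P.integrable_const_bound[where B=1]) (auto intro: mt[OF that])
  have it2: "integrable C (\<lambda>c. of_bool (c t) * of_bool (c s) :: real)" if "t \<in> T" "s \<in> T" for t s
    by (rule P.integrable_const_bound[where B=1]) (auto intro!: borel_measurable_times mt[OF that(1)] mt[OF that(2)])
  have fr: "\<And>v. (\<Sum>t\<in>T. of_bool (J t = v) :: real) = real (freq T J v)"
    using T by (simp add: freq_def Int_def conj_commute)
  show meas: "(\<lambda>c. \<Sum>t\<in>T. of_bool (J t = v \<and> c t) :: real) \<in> borel_measurable C"
    unfolding eqA using mt by (auto intro!: borel_measurable_sum borel_measurable_times)
  show "\<And>c. \<bar>\<Sum>t\<in>T. of_bool (J t = v \<and> c t) :: real\<bar> \<le> real (card T)"
  proof -
    fix c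
    have "0 \<le> (\<Sum>t\<in>T. of_bool (J t = v \<and> c t) :: real)" by (simp add: sum_nonneg)
    moreover have "(\<Sum>t\<in>T. of_bool (J t = v \<and> c t) :: real) \<le> (\<Sum>t\<in>T. 1)"
      by (intro sum_mono) auto
    ultimately show "\<bar>\<Sum>t\<in>T. of_bool (J t = v \<and> c t) :: real\<bar> \<le> real (card T)" by simp
  qed
  have "(\<integral>c. (\<Sum>t\<in>T. of_bool (J t = v \<and> c t) :: real) \<partial>C) =
        (\<Sum>t\<in>T. of_bool (J t = v) * (\<integral>c. of_bool (c t) \<partial>C))"
    unfolding eqA using it by (simp add: integral_sum)
  also have "\<dots> = (\<Sum>t\<in>T. of_bool (J t = v) * q)" using pi1 by simp
  also have "\<dots> = q * real (freq T J v)" using fr[of v] by (simp add: sum_distrib_left[symmetric] mult.commute)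
  finally show "(\<integral>c. (\<Sum>t\<in>T. of_bool (J t = v \<and> c t) :: real) \<partial>C) = q * real (freq T J v)" .
  have prodeq: "\<And>c. (\<Sum>t\<in>T. of_bool (J t = v \<and> c t) :: real) * (\<Sum>t\<in>T. of_bool (J t = w \<and> c t)) =
     (\<Sum>t\<in>T. \<Sum>s\<in>T. (of_bool (J t = v) * of_bool (J s = w)) * (of_bool (c t) * of_bool (c s)))"
    unfolding eqA sum_product by (intro sum.cong refl) (simp add: ac_simps)
  have "(\<integral>c. (\<Sum>t\<in>T. of_bool (J t = v \<and> c t) :: real) * (\<Sum>t\<in>T. of_bool (J t = w \<and> c t)) \<partial>C)
     = (\<Sum>t\<in>T. \<Sum>s\<in>T. (of_bool (J t = v) * of_bool (J s = w)) * (\<integral>c. of_bool (c t) * of_bool (c s) \<partial>C))"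
    unfolding prodeq using it2 by (simp add: integral_sum integrable_sum)
  also have "\<dots> = (\<Sum>t\<in>T. \<Sum>s\<in>T. (of_bool (J t = v) * of_bool (J s = w)) * (if t = s then q else q^2))"
    using pi2 by simp
  also have "\<dots> = (\<Sum>t\<in>T. \<Sum>s\<in>T. q^2 * of_bool (J t = v) * of_bool (J s = w)
                 + (if t = s then (q - q^2) * of_bool (J t = v) * of_bool (J t = w) else 0))"
    by (intro sum.cong refl) (auto simp: algebra_simps)
  also have "\<dots> = q^2 * (\<Sum>t\<in>T. of_bool (J t = v)) * (\<Sum>s\<in>T. of_bool (J s = w))
                  + (\<Sum>t\<in>T. (q - q^2) * of_bool (J t = v) * of_bool (J t = w))"
  proof -
    have "(\<Sum>t\<in>T. \<Sum>s\<in>T. q^2 * of_bool (J t = v) * of_bool (J s = w)) =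
          q^2 * (\<Sum>t\<in>T. of_bool (J t = v)) * (\<Sum>s\<in>T. of_bool (J s = w))"
      by (unfold mult.assoc sum_product, simp only: sum_distrib_left)
    moreover have "(\<Sum>t\<in>T. \<Sum>s\<in>T. (if t = s then (q - q^2) * of_bool (J t = v) * of_bool (J t = w) else 0)) =
          (\<Sum>t\<in>T. (q - q^2) * of_bool (J t = v) * of_bool (J t = w))"
      using T by (intro sum.cong refl) (simp add: sum.delta)
    ultimately show ?thesis by (simp only: sum.distrib)
  qed
  also have "(\<Sum>t\<in>T. (q - q^2) * of_bool (J t = v) * of_bool (J t = w)) = (if v = w then (q - q^2) * real (freq T J v) else 0)"
  proof -
    have "\<And>t. (q - q^2) * of_bool (J t = v) * of_bool (J t = w) = (if v = w then (q - q^2) * of_bool (J t = v) else (0::real))"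
      by auto
    then have "(\<Sum>t\<in>T. (q - q^2) * of_bool (J t = v) * of_bool (J t = w)) = (if v = w then (q - q^2) * (\<Sum>t\<in>T. of_bool (J t = v)) else (0::real))"
      by (simp add: sum_distrib_left del: sum_of_bool_eq)
    then show ?thesis using fr by (simp del: sum_of_bool_eq)
  qed
  finally show "(\<integral>c. (\<Sum>t\<in>T. of_bool (J t = v \<and> c t) :: real) * (\<Sum>t\<in>T. of_bool (J t = w \<and> c t)) \<partial>C)
          = q^2 * real (freq T J v) * real (freq T J w) + (if v = w then (q - q^2) * real (freq T J v) else 0)"
    using fr by simp
qed


lemma hash_moments:
  fixes U :: "'u set"
  assumes U: "finite U" and vw: "v \<in> U" "w \<in> U" and p: "0 \<le> p" "p \<le> 1"
  defines "H \<equiv> (\<Pi>\<^sub>M v\<in>U. uniform_measure lborel {0..1::real})"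
  shows "(\<lambda>h. indicator {..<p} (h v) * indicator {..<p} (h w) :: real) \<in> borel_measurable H"
    and "(\<lambda>h. indicator {..<p} (h v) :: real) \<in> borel_measurable H"
    and "(\<integral>h. indicator {..<p} (h v) \<partial>H) = (p::real)"
    and "(\<integral>h. indicator {..<p} (h v) * indicator {..<p} (h w) \<partial>H) = (p^2 + (if v = w then p - p^2 else 0)::real)"
proof -
  have ind: "(\<lambda>y. indicator {..<p} y :: real) \<in> borel_measurable (uniform_measure lborel {0..1::real})"
    by simp
  have one: "(\<lambda>y. 1 :: real) \<in> borel_measurable (uniform_measure lborel {0..1::real})" by simp
  have ib: "\<And>y. \<bar>indicator {..<p} y :: real\<bar> \<le> 1" by (simp add: indicator_def)
  have ob: "\<And>y::real. \<bar>1::real\<bar> \<le> 1" by simp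
  have sq: "\<And>y. indicator {..<p} y * indicator {..<p} y = (indicator {..<p} y :: real)"
    by (simp add: indicator_def)
  show "(\<lambda>h. indicator {..<p} (h v) * indicator {..<p} (h w) :: real) \<in> borel_measurable H"
    unfolding H_def using vw by measurable
  show "(\<lambda>h. indicator {..<p} (h v) :: real) \<in> borel_measurable H"
    unfolding H_def using vw by measurable
  show "(\<integral>h. indicator {..<p} (h v) \<partial>H) = (p::real)"
    unfolding H_def using pi_int2[OF unif_prob U vw(1) vw(1) ind one ib ob] unif_F[OF p] by simp
  show "(\<integral>h. indicator {..<p} (h v) * indicator {..<p} (h w) \<partial>H) = (p^2 + (if v = w then p - p^2 else 0)::real)"
    unfolding H_def using pi_int2[OF unif_prob U vw ind ind ib ib] unif_F[OF p]
    by (simp add: sq power2_eq_square)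
qed


theorem lemma1:
  fixes U :: "'u set" and T1 :: "'r1 set" and T2 :: "'r2 set"
    and J1 :: "'r1 \<Rightarrow> 'u" and J2 :: "'r2 \<Rightarrow> 'u"
    and p1 q1 p2 q2 :: real
  assumes "finite U" and "finite T1" and "finite T2"
    and "J1 ` T1 \<subseteq> U" and "J2 ` T2 \<subseteq> U"
    and "0 < p1" "p1 \<le> 1" "0 < q1" "q1 \<le> 1"
    and "0 < p2" "p2 \<le> 1" "0 < q2" "q2 \<le> 1"
  shows "prob_space.variance (ubs_space U T1 T2 q1 q2)
           (\<lambda>(h, c1, c2). real (join_card (ubs T1 J1 p1 h c1) J1 (ubs T2 J2 p2 h c2) J2)
                           / (min p1 p2 * q1 * q2))
         = (1 - min p1 p2) / min p1 p2 * gamma U (freq T1 J1) (freq T2 J2) 2 2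
           + (1 - q2) / (min p1 p2 * q2) * gamma U (freq T1 J1) (freq T2 J2) 2 1
           + (1 - q1) / (min p1 p2 * q1) * gamma U (freq T1 J1) (freq T2 J2) 1 2
           + (1 - q1) * (1 - q2) / (min p1 p2 * q1 * q2) * gamma U (freq T1 J1) (freq T2 J2) 1 1"
proof -
  note U = assms(1) and T = assms(2,3) and J = assms(4,5)
  define p where "p = min p1 p2"
  have p: "0 < p" "p \<le> 1" using assms by (auto simp: p_def)
  have q1: "0 < q1" "q1 \<le> 1" and q2: "0 < q2" "q2 \<le> 1" using assms by auto
  define H where "H = (\<Pi>\<^sub>M v\<in>U. uniform_measure lborel {0..1::real})"
  define C1 where "C1 = (\<Pi>\<^sub>M t\<in>T1. measure_pmf (bernoulli_pmf q1))"
  define C2 where "C2 = (\<Pi>\<^sub>M t\<in>T2. measure_pmf (bernoulli_pmf q2))"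
  define M where "M = H \<Otimes>\<^sub>M (C1 \<Otimes>\<^sub>M C2)"
  have Mdef: "ubs_space U T1 T2 q1 q2 = M" by (simp add: ubs_space_def M_def H_def C1_def C2_def)
  have Hp: "prob_space H" unfolding H_def by (rule prob_space_PiM) (rule unif_prob)
  have C1p: "prob_space C1" unfolding C1_def by (rule prob_space_PiM) (rule prob_space_measure_pmf)
  have C2p: "prob_space C2" unfolding C2_def by (rule prob_space_PiM) (rule prob_space_measure_pmf)
  interpret MP: prob_space M unfolding M_def by (intro prob_space_pair Hp C1p C2p)
  define a where "a v = real (freq T1 J1 v)" for v
  define b where "b v = real (freq T2 J2 v)" for v
  define A where "A v c = (\<Sum>t\<in>T1. of_bool (J1 t = v \<and> c t) :: real)" for v c
  define B where "B v c = (\<Sum>t\<in>T2. of_bool (J2 t = v \<and> c t) :: real)" for v c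
  define F where "F v h = (indicator {..<p} (h v) :: real)" for v and h :: "'u \<Rightarrow> real"
  define Y where "Y v \<omega> = F v (fst \<omega>) * A v (fst (snd \<omega>)) * B v (snd (snd \<omega>))" for v \<omega>
  define c where "c = p * q1 * q2"
  have c0: "c \<noteq> 0" using p q1 q2 by (simp add: c_def)
  have Xeq: "(\<lambda>(h, c1, c2). real (join_card (ubs T1 J1 p1 h c1) J1 (ubs T2 J2 p2 h c2) J2)
                           / (min p1 p2 * q1 * q2)) = (\<lambda>\<omega>. (\<Sum>v\<in>U. Y v \<omega>) / c)"
  proof
    fix \<omega> :: "('u \<Rightarrow> real) \<times> ('r1 \<Rightarrow> bool) \<times> ('r2 \<Rightarrow> bool)"
    obtain h c1 c2 where om: "\<omega> = (h, c1, c2)" by (cases \<omega>) auto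
    have "\<And>v. of_bool (h v < p1 \<and> h v < p2) = F v h" by (simp add: F_def p_def indicator_def)
    then show "(case \<omega> of (h, c1, c2) \<Rightarrow> real (join_card (ubs T1 J1 p1 h c1) J1 (ubs T2 J2 p2 h c2) J2)
                           / (min p1 p2 * q1 * q2)) = (\<Sum>v\<in>U. Y v \<omega>) / c"
      unfolding om
      by (simp add: join_sum[OF U T J] Y_def A_def B_def c_def p_def)
  qed
  have cm1: "A v \<in> borel_measurable C1" "\<And>x. \<bar>A v x\<bar> \<le> real (card T1)"
     "(\<integral>x. A v x \<partial>C1) = q1 * a v"
     "(\<integral>x. A v x * A w x \<partial>C1) = q1^2 * a v * a w + (if v = w then (q1 - q1^2) * a v else 0)" for v w
    using coin_moments[OF T(1), where q=q1 and J=J1] q1 unfolding A_def a_def C1_def by auto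
  have cm2: "B v \<in> borel_measurable C2" "\<And>x. \<bar>B v x\<bar> \<le> real (card T2)"
     "(\<integral>x. B v x \<partial>C2) = q2 * b v"
     "(\<integral>x. B v x * B w x \<partial>C2) = q2^2 * b v * b w + (if v = w then (q2 - q2^2) * b v else 0)" for v w
    using coin_moments[OF T(2), where q=q2 and J=J2] q2 unfolding B_def b_def C2_def by auto
  have hm: "F v \<in> borel_measurable H" "(\<lambda>h. F v h * F w h) \<in> borel_measurable H"
     "(\<integral>h. F v h \<partial>H) = p"
     "(\<integral>h. F v h * F w h \<partial>H) = p^2 + (if v = w then p - p^2 else 0)"
     if "v \<in> U" "w \<in> U" for v w
    using hash_moments[OF U that, of p] p unfolding F_def H_def by auto
  have Fb: "\<And>h. \<bar>F v h\<bar> \<le> 1" for v by (simp add: F_def indicator_def)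
  have Yf: "Y v = (\<lambda>\<omega>. F v (fst \<omega>) * A v (fst (snd \<omega>)) * B v (snd (snd \<omega>)))" for v
    by (simp add: Y_def fun_eq_iff)
  have Yi: "integrable M (Y v)" "integral\<^sup>L M (Y v) = p * (q1 * a v) * (q2 * b v)" if "v \<in> U" for v
    using triple_int[OF Hp C1p C2p hm(1)[OF that that] cm1(1) cm2(1) Fb cm1(2) cm2(2)]
    unfolding Yf M_def by (simp_all add: hm(3)[OF that that] cm1(3) cm2(3))
  have YYf: "(\<lambda>\<omega>. Y v \<omega> * Y w \<omega>) = (\<lambda>\<omega>. (F v (fst \<omega>) * F w (fst \<omega>)) * (A v (fst (snd \<omega>)) * A w (fst (snd \<omega>)))
       * (B v (snd (snd \<omega>)) * B w (snd (snd \<omega>))))" for v w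
    by (simp add: Y_def fun_eq_iff ac_simps)
  have FFb: "\<bar>F v h * F w h\<bar> \<le> 1" for v w h using Fb[of v h] Fb[of w h]
    by (simp add: abs_mult mult_le_one)
  have AAb: "\<bar>A v x * A w x\<bar> \<le> real (card T1) * real (card T1)" for v w x
    using cm1(2)[of v x] cm1(2)[of w x] by (simp add: abs_mult mult_mono)
  have BBb: "\<bar>B v x * B w x\<bar> \<le> real (card T2) * real (card T2)" for v w x
    using cm2(2)[of v x] cm2(2)[of w x] by (simp add: abs_mult mult_mono)
  have AAm: "(\<lambda>x. A v x * A w x) \<in> borel_measurable C1" for v w using cm1(1) by simp
  have BBm: "(\<lambda>x. B v x * B w x) \<in> borel_measurable C2" for v w using cm2(1) by simp
  have YYi: "integrable M (\<lambda>\<omega>. Y v \<omega> * Y w \<omega>)"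
    "(\<integral>\<omega>. Y v \<omega> * Y w \<omega> \<partial>M) = (p^2 + (if v = w then p - p^2 else 0))
        * (q1^2 * a v * a w + (if v = w then (q1 - q1^2) * a v else 0))
        * (q2^2 * b v * b w + (if v = w then (q2 - q2^2) * b v else 0))"
    if "v \<in> U" "w \<in> U" for v w
    using triple_int[OF Hp C1p C2p hm(2)[OF that] AAm BBm FFb AAb BBb]
    unfolding YYf M_def by (simp_all add: hm(4)[OF that] cm1(4) cm2(4))
  define X where "X = (\<lambda>\<omega>. (\<Sum>v\<in>U. Y v \<omega>) / c)"
  have Xi: "integrable M X" unfolding X_def using Yi(1) by (intro integrable_divide_zero integrable_sum) auto
  have X2f: "(\<lambda>\<omega>. (X \<omega>)^2) = (\<lambda>\<omega>. (\<Sum>v\<in>U. \<Sum>w\<in>U. Y v \<omega> * Y w \<omega>) / c^2)"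
    by (simp add: X_def fun_eq_iff power_divide power2_eq_square sum_product)
  have X2i: "integrable M (\<lambda>\<omega>. (X \<omega>)^2)" unfolding X2f using YYi(1)
    by (intro integrable_divide_zero integrable_sum) auto
  have EX: "MP.expectation X = (\<Sum>v\<in>U. a v * b v)"
  proof -
    have "MP.expectation X = (\<Sum>v\<in>U. p * (q1 * a v) * (q2 * b v)) / c"
      unfolding X_def using Yi by (simp add: integral_sum)
    also have "\<dots> = (\<Sum>v\<in>U. a v * b v)" using c0
      by (simp add: c_def sum_distrib_left[symmetric] ac_simps)
    finally show ?thesis .
  qed
  define R where "R v = (p^2 + (p - p^2)) * (q1^2 * a v * a v + (q1 - q1^2) * a v)
        * (q2^2 * b v * b v + (q2 - q2^2) * b v) - c^2 * (a v * b v) * (a v * b v)" for v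
  have termeq: "(p^2 + (if v = w then p - p^2 else 0))
        * (q1^2 * a v * a w + (if v = w then (q1 - q1^2) * a v else 0))
        * (q2^2 * b v * b w + (if v = w then (q2 - q2^2) * b v else 0))
        = c^2 * (a v * b v) * (a w * b w) + (if v = w then R v else 0)" for v w
    by (cases "v = w") (simp_all add: R_def c_def power2_eq_square algebra_simps)
  have EX2: "MP.expectation (\<lambda>\<omega>. (X \<omega>)^2) = (\<Sum>v\<in>U. a v * b v)^2 + (\<Sum>v\<in>U. R v) / c^2"
  proof -
    have "MP.expectation (\<lambda>\<omega>. (X \<omega>)^2) = (\<Sum>v\<in>U. \<Sum>w\<in>U.
        c^2 * (a v * b v) * (a w * b w) + (if v = w then R v else 0)) / c^2"
      unfolding X2f using YYi by (simp add: integral_sum integrable_sum termeq)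
    also have "\<dots> = (c^2 * (\<Sum>v\<in>U. a v * b v)^2 + (\<Sum>v\<in>U. R v)) / c^2"
    proof -
      have s1: "(\<Sum>v\<in>U. \<Sum>w\<in>U. c^2 * (a v * b v) * (a w * b w)) = c^2 * (\<Sum>v\<in>U. a v * b v)^2"
      proof -
        have "(\<Sum>v\<in>U. a v * b v)^2 = (\<Sum>v\<in>U. \<Sum>w\<in>U. (a v * b v) * (a w * b w))"
          by (simp only: power2_eq_square sum_product)
        then show ?thesis by (simp add: sum_distrib_left mult.assoc)
      qed
      have s2: "(\<Sum>v\<in>U. \<Sum>w\<in>U. (if v = w then R v else 0)) = (\<Sum>v\<in>U. R v)"
        using U by (intro sum.cong refl) (simp add: sum.delta)
      show ?thesis using s1 s2 by (simp only: sum.distrib)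
    qed
    also have "\<dots> = (\<Sum>v\<in>U. a v * b v)^2 + (\<Sum>v\<in>U. R v) / c^2"
      using c0 by (simp add: add_divide_distrib)
    finally show ?thesis .
  qed
  have Rv: "R v / c^2 = (1 - p) / p * (a v ^ 2 * b v ^ 2) + (1 - q2) / (p * q2) * (a v ^ 2 * b v ^ 1)
      + (1 - q1) / (p * q1) * (a v ^ 1 * b v ^ 2) + (1 - q1) * (1 - q2) / (p * q1 * q2) * (a v ^ 1 * b v ^ 1)" for v
    using p q1 q2 unfolding R_def c_def by (simp add: field_simps power2_eq_square)
  have "MP.variance X = (\<Sum>v\<in>U. R v / c^2)"
    using MP.variance_eq[OF Xi X2i] EX EX2 by (simp add: sum_divide_distrib)
  also have "\<dots> = (1 - p) / p * gamma U (freq T1 J1) (freq T2 J2) 2 2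
           + (1 - q2) / (p * q2) * gamma U (freq T1 J1) (freq T2 J2) 2 1
           + (1 - q1) / (p * q1) * gamma U (freq T1 J1) (freq T2 J2) 1 2
           + (1 - q1) * (1 - q2) / (p * q1 * q2) * gamma U (freq T1 J1) (freq T2 J2) 1 1"
    unfolding Rv gamma_def a_def b_def by (simp add: sum.distrib sum_distrib_left)
  finally have fin: "MP.variance X = (1 - p) / p * gamma U (freq T1 J1) (freq T2 J2) 2 2
           + (1 - q2) / (p * q2) * gamma U (freq T1 J1) (freq T2 J2) 2 1
           + (1 - q1) / (p * q1) * gamma U (freq T1 J1) (freq T2 J2) 1 2
           + (1 - q1) * (1 - q2) / (p * q1 * q2) * gamma U (freq T1 J1) (freq T2 J2) 1 1" .
  show ?thesis unfolding Mdef Xeq X_def[symmetric] unfolding p_def[symmetric] by (rule fin)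
qed

thm_deps lemma1

end
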